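(* Let $\gamma>0$, $t>0$, let $M$ be a positive integer, and set $\alpha = 1+1/\gamma$. Let $X$ be a random variable with the bounded continuous power-law distribution with exponent $-\alpha$ on the domain $\bigl(1, (\tfrac{t}{t+M+1})^{-\gamma}\bigr)$, i.e. with density proportional to $x^{-\alpha}$ on that interval and $0$ elsewhere. Then: (1) The $(M+1)$-quantiles of $X$ (the $M$ points dividing its distribution into $M+1$ parts of equal probability) are, up to a common positive constant factor (independent of $k$), the numbers $(t+1)^{-\gamma}, (t+2)^{-\gamma}, \dots, (t+M)^{-\gamma}$. (2) Let $\mathbf{F}=(F_1,\dots,F_M)$ be observed frequencies (positive integers) with maximum $F_{\max}=F_1>1$, modeled as $M$ independent draws from the distribution of $X$. With $\gamma$ (hence $\alpha$) and $M$ fixed, the value of $t>0$ that maximizes the likelihood of observing $\mathbf{F}$ is $$t = \frac{M+1}{F_{\max}^{1/\gamma}-1}.$$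
   Context: Setting: one has a data set of $M$ distinct items (error message types) with observed occurrence counts $F_1\ge F_2\ge\dots\ge F_M\ge 1$, where $F_{\max}:=F_1$ is the largest count. A Zipf–Mandelbrot distribution with parameters $\gamma$ and $t$ assigns to the $k$-th most common item a frequency proportional to $(k+t)^{-\gamma}$. In part (2), the observed frequency vector $\mathbf{F}$ is treated as an unordered sample of $M$ values from the continuous distribution of $X$, and the likelihood is the product of the densities of $X$ at $F_1,\dots,F_M$ (which is zero if some $F_k$ lies outside the domain of $X$). *)

theory Defs
  imports "HOL-Probability.Probability"
begin

definition pl_upper :: "real \<Rightarrow> real \<Rightarrow> nat \<Rightarrow> real" where
  "pl_upper \<gamma> t M = (t / (t + real M + 1)) powr (-\<gamma>)"

definition pl_density :: "real \<Rightarrow> real \<Rightarrow> nat \<Rightarrow> real \<Rightarrow> real" where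
  "pl_density \<gamma> t M x =
     (if 1 \<le> x \<and> x \<le> pl_upper \<gamma> t M
      then x powr (-(1 + 1/\<gamma>)) / integral {1 .. pl_upper \<gamma> t M} (\<lambda>s. s powr (-(1 + 1/\<gamma>)))
      else 0)"

definition pl_dist :: "real \<Rightarrow> real \<Rightarrow> nat \<Rightarrow> real measure" where
  "pl_dist \<gamma> t M = density lborel (\<lambda>x. ennreal (pl_density \<gamma> t M x))"

definition pl_quantiles :: "real \<Rightarrow> real \<Rightarrow> nat \<Rightarrow> real set" where
  "pl_quantiles \<gamma> t M =
     {q. \<exists>j\<in>{1..M}. measure (pl_dist \<gamma> t M) {..q} = real j / (real M + 1)}"

definition pl_likelihood :: "real \<Rightarrow> real \<Rightarrow> nat \<Rightarrow> (nat \<Rightarrow> nat) \<Rightarrow> real" where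
  "pl_likelihood \<gamma> t M F = (\<Prod>i\<in>{1..M}. pl_density \<gamma> t M (real (F i)))"

end

theory Submission
  imports Defs
begin


lemma ftc_pow:
  fixes g m :: real
  assumes g: "g > 0" and m: "1 \<le> m"
  shows "((\<lambda>s. s powr (-(1 + 1/g))) has_integral (g * (1 - m powr (-1/g)))) {1..m}"
proof -
  have "((\<lambda>s. s powr (-(1 + 1/g))) has_integral ((\<lambda>s. - g * s powr (-1/g)) m - (\<lambda>s. - g * s powr (-1/g)) 1)) {1..m}"
  proof (rule fundamental_theorem_of_calculus_interior_strong[where S="{}"])
    show "continuous_on {1..m} (\<lambda>s. - g * s powr (- 1 / g))"
      by (intro continuous_intros) auto
    fix x :: real assume x: "x \<in> {1<..<m} - {}"
    have "((\<lambda>s. - g * s powr (- 1 / g)) has_real_derivative (- g * ((-1/g) * x powr (-1/g - 1)))) (at x)"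
      using x by (intro DERIV_cmult has_real_derivative_powr) auto
    moreover have "- g * ((-1/g) * x powr (-1/g - 1)) = x powr (-(1 + 1/g))"
    proof -
      have e: "-1/g - 1 = -(1+1/g)" by simp
      have "- g * ((-1/g) * x powr (-1/g - 1)) = x powr (-1/g - 1)" using g by simp
      then show ?thesis unfolding e .
    qed
    ultimately show "((\<lambda>s. - g * s powr (- 1 / g)) has_vector_derivative x powr (-(1 + 1/g))) (at x)"
      by (simp add: has_real_derivative_iff_has_vector_derivative)
  qed (use m in auto)
  then show ?thesis by (simp add: algebra_simps)
qed

lemma U_alt:
  assumes g: "g > 0" and t: "t > 0"
  shows "pl_upper g t M = ((t + real M + 1) / t) powr g"
  using g t by (simp add: pl_upper_def powr_minus_divide powr_divide)

lemma U_ge1: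
  assumes g: "g > 0" and t: "t > 0"
  shows "1 \<le> pl_upper g t M"
  unfolding U_alt[OF g t] using g t by (intro ge_one_powr_ge_zero) auto

lemma U_pow:
  assumes g: "g > 0" and t: "t > 0"
  shows "pl_upper g t M powr (-1/g) = t / (t + real M + 1)"
  using g t by (simp add: pl_upper_def powr_powr)

lemma Z_eq:
  assumes g: "g > 0" and t: "t > 0"
  shows "integral {1 .. pl_upper g t M} (\<lambda>s. s powr (-(1 + 1/g))) = g * (real M + 1) / (t + real M + 1)"
proof -
  have "integral {1 .. pl_upper g t M} (\<lambda>s. s powr (-(1 + 1/g))) = g * (1 - t / (t + real M + 1))"
    using ftc_pow[OF g U_ge1[OF g t]] U_pow[OF g t] by (simp add: integral_unique)
  also have "\<dots> = g * (real M + 1) / (t + real M + 1)" using t by (simp add: field_simps)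
  finally show ?thesis .
qed

lemma density_eq:
  assumes g: "g > 0" and t: "t > 0"
  shows "pl_density g t M x = (if 1 \<le> x \<and> x \<le> pl_upper g t M
      then x powr (-(1 + 1/g)) * (t + real M + 1) / (g * (real M + 1)) else 0)"
  unfolding pl_density_def Z_eq[OF g t] by simp

lemma cdf:
  assumes g: "g > 0" and t: "t > 0" and q: "1 \<le> q"
  shows "measure (pl_dist g t M) {..q} = (1 - (min q (pl_upper g t M)) powr (-1/g)) * (t + real M + 1) / (real M + 1)"
proof -
  define U where "U = pl_upper g t M"
  define m where "m = min q U"
  define K where "K = (t + real M + 1) / (g * (real M + 1))"
  have K: "K > 0" using g t by (simp add: K_def)
  have m1: "1 \<le> m" using q U_ge1[OF g t] by (simp add: m_def U_def)
  have meas: "(\<lambda>x. ennreal (pl_density g t M x)) \<in> borel_measurable borel"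
    unfolding density_eq[OF g t] by measurable
  have "emeasure (pl_dist g t M) {..q} = (\<integral>\<^sup>+ x. ennreal (pl_density g t M x) * indicator {..q} x \<partial>lborel)"
    unfolding pl_dist_def by (rule emeasure_density) (use meas in auto)
  also have "\<dots> = (\<integral>\<^sup>+ x. ennreal (x powr (-(1 + 1/g)) * K) * indicator {1..m} x \<partial>lborel)"
    by (intro nn_integral_cong) (auto simp: density_eq[OF g t] indicator_def m_def U_def K_def)
  also have "\<dots> = ennreal (g * (1 - m powr (-1/g)) * K)"
  proof (rule nn_integral_has_integral_lebesgue')
    show "\<And>x. x \<in> {1..m} \<Longrightarrow> 0 \<le> x powr - (1 + 1 / g) * K" using K by auto
    show "((\<lambda>x. x powr - (1 + 1 / g) * K) has_integral g * (1 - m powr (- 1 / g)) * K) {1..m}"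
      using has_integral_mult_left[OF ftc_pow[OF g m1]] .
  qed
  finally have e: "emeasure (pl_dist g t M) {..q} = ennreal (g * (1 - m powr (-1/g)) * K)" .
  have "m powr (-1/g) \<le> 1" using powr_mono[of "-1/g" 0 m] m1 g by auto
  then have "0 \<le> g * (1 - m powr (-1/g)) * K" using g K by auto
  then have "measure (pl_dist g t M) {..q} = g * (1 - m powr (-1/g)) * K"
    using e by (simp add: measure_def)
  then show ?thesis using g by (simp add: K_def m_def U_def)
qed

lemma cdf0:
  assumes g: "g > 0" and t: "t > 0" and q: "q < 1"
  shows "measure (pl_dist g t M) {..q} = 0"
proof -
  have meas: "(\<lambda>x. ennreal (pl_density g t M x)) \<in> borel_measurable borel"
    unfolding density_eq[OF g t] by measurable
  have "emeasure (pl_dist g t M) {..q} = (\<integral>\<^sup>+ x. ennreal (pl_density g t M x) * indicator {..q} x \<partial>lborel)"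
    unfolding pl_dist_def by (rule emeasure_density) (use meas in auto)
  also have "\<dots> = (\<integral>\<^sup>+ (x::real). 0 \<partial>lborel)"
  proof (rule nn_integral_cong)
    fix x :: real show "ennreal (pl_density g t M x) * indicator {..q} x = 0"
      using q by (auto simp: pl_density_def indicator_def)
  qed
  finally show ?thesis by (simp add: measure_def)
qed


lemma qform:
  fixes g y S :: real
  assumes g: "g > 0" and y: "y > 0" and S: "S > 0"
  shows "S powr g * y powr (-g) = (S / y) powr g"
    and "(S powr g * y powr (-g)) powr (-1/g) = y / S"
proof -
  show 1: "S powr g * y powr (-g) = (S / y) powr g"
  proof -
    have "y powr (-g) = 1 / y powr g" by (rule powr_minus_divide)
    moreover have "(S / y) powr g = S powr g / y powr g" using y S by (simp add: powr_divide)
    ultimately show ?thesis by simp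
  qed
  show "(S powr g * y powr (-g)) powr (-1/g) = y / S"
    unfolding 1 using g y S by (simp add: powr_powr powr_minus_divide powr_divide)
qed

lemma part1:
  assumes g: "g > 0" and t: "t > 0"
  shows "pl_quantiles g t M = {(t + real M + 1) powr g * (t + real k) powr (-g) | k. k \<in> {1..M}}"
proof (intro set_eqI iffI)
  define S where "S = t + real M + 1"
  have S: "S > 0" using t by (simp add: S_def)
  fix q
  {
    assume "q \<in> pl_quantiles g t M"
    then obtain j where j: "j \<in> {1..M}" and mq: "measure (pl_dist g t M) {..q} = real j / (real M + 1)"
      by (auto simp: pl_quantiles_def)
    have q1: "1 \<le> q"
    proof (rule ccontr)
      assume "\<not> 1 \<le> q" then have "measure (pl_dist g t M) {..q} = 0" using cdf0[OF g t] by simp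
      with mq j show False by simp
    qed
    have qU: "q \<le> pl_upper g t M"
    proof (rule ccontr)
      assume "\<not> q \<le> pl_upper g t M"
      then have "min q (pl_upper g t M) = pl_upper g t M" by simp
      then have "measure (pl_dist g t M) {..q} = (1 - t / (t + real M + 1)) * (t + real M + 1) / (real M + 1)"
        using cdf[OF g t q1, where M=M] U_pow[OF g t, where M=M] by simp
      also have "\<dots> = 1"
      proof -
        have "t + real M + 1 > 0" "real M + 1 > 0" using t by auto
        then have "(1 - t / (t + real M + 1)) * (t + real M + 1) = real M + 1"
          by (simp add: field_simps)
        then show ?thesis by simp
      qed
      finally have "measure (pl_dist g t M) {..q} = 1" .
      with mq j show False by (simp add: field_simps)
    qed
    have "(1 - q powr (-1/g)) * S / (real M + 1) = real j / (real M + 1)"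
      using cdf[OF g t q1, where M=M] mq qU by (simp add: S_def)
    then have qp: "q powr (-1/g) = (S - real j) / S" using S by (simp add: field_simps)
    define k where "k = M + 1 - j"
    have k: "k \<in> {1..M}" and rk: "real k = real M + 1 - real j" using j by (auto simp: k_def)
    have Sj: "S - real j = t + real k" using rk by (simp add: S_def)
    have "q = (q powr (-1/g)) powr (-g)" using q1 g by (simp add: powr_powr)
    also have "\<dots> = (S / (t + real k)) powr g"
      unfolding qp Sj using S t by (simp add: powr_minus_divide powr_divide)
    also have "\<dots> = S powr g * (t + real k) powr (-g)"
      using qform(1)[OF g _ S, of "t + real k"] t by simp
    finally show "q \<in> {(t + real M + 1) powr g * (t + real k) powr (-g) | k. k \<in> {1..M}}"
      using k by (auto simp: S_def)
  next
    assume "q \<in> {(t + real M + 1) powr g * (t + real k) powr (-g) | k. k \<in> {1..M}}"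
    then obtain k where k: "k \<in> {1..M}" and qd: "q = S powr g * (t + real k) powr (-g)"
      by (auto simp: S_def)
    have y: "t + real k > 0" using t by simp
    have qa: "q = (S / (t + real k)) powr g" using qform(1)[OF g y S] qd by simp
    have qp: "q powr (-1/g) = (t + real k) / S" using qform(2)[OF g y S] qd by simp
    have q1: "1 \<le> q" unfolding qa using g k t by (intro ge_one_powr_ge_zero) (auto simp: S_def)
    have qU: "q \<le> pl_upper g t M" unfolding qa U_alt[OF g t] using g k t
      by (intro powr_mono2) (auto simp: S_def field_simps)
    have "measure (pl_dist g t M) {..q} = (1 - (t + real k) / S) * S / (real M + 1)"
      using cdf[OF g t q1, where M=M] qU qp by (simp add: S_def)
    also have "\<dots> = real (M + 1 - k) / (real M + 1)"
    proof -
      have "(1 - (t + real k) / S) * S = S - (t + real k)" using S by (simp add: field_simps)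
      also have "\<dots> = real (M + 1 - k)" using k by (simp add: S_def of_nat_diff)
      finally show ?thesis by simp
    qed
    finally show "q \<in> pl_quantiles g t M" using k unfolding pl_quantiles_def
      by (intro CollectI bexI[of _ "M + 1 - k"]) auto
  }
qed


lemma feasible:
  assumes g: "g > 0" and t: "t > 0" and f: "f > 1"
  shows "f \<le> pl_upper g t M \<longleftrightarrow> t \<le> (real M + 1) / (f powr (1/g) - 1)"
proof -
  define p where "p = f powr (1/g)"
  define r where "r = (t + real M + 1) / t"
  have p1: "p > 1" unfolding p_def using f g by simp
  have r0: "r > 0" using t by (simp add: r_def)
  have fp: "f = p powr g" unfolding p_def using f g by (simp add: powr_powr)
  have "f \<le> pl_upper g t M \<longleftrightarrow> p powr g \<le> r powr g"
    unfolding U_alt[OF g t] fp r_def ..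
  also have "\<dots> \<longleftrightarrow> p \<le> r"
  proof
    assume "p powr g \<le> r powr g"
    show "p \<le> r"
    proof (rule ccontr)
      assume "\<not> p \<le> r"
      then have "r powr g < p powr g" using powr_less_mono2[OF g, of r p] r0 by simp
      with \<open>p powr g \<le> r powr g\<close> show False by simp
    qed
  qed (use g p1 in \<open>intro powr_mono2; auto\<close>)
  also have "\<dots> \<longleftrightarrow> t * (p - 1) \<le> real M + 1"
    unfolding r_def using t by (simp add: field_simps)
  also have "\<dots> \<longleftrightarrow> t \<le> (real M + 1) / (p - 1)"
    using p1 by (simp add: field_simps)
  finally show ?thesis unfolding p_def .
qed


lemma lik:
  assumes g: "g > 0" and t: "t > 0"
    and F1: "\<forall>i\<in>{1..M}. 1 \<le> F i" and Fm: "\<forall>i\<in>{1..M}. \<forall>j\<in>{1..M}. i \<le> j \<longrightarrow> F j \<le> F i"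
    and Fg: "F 1 > (1::nat)" and M: "M > 0"
  shows "pl_likelihood g t M F = (if t \<le> (real M + 1) / (real (F 1) powr (1/g) - 1)
     then (\<Prod>i\<in>{1..M}. real (F i) powr (-(1 + 1/g))) * ((t + real M + 1) / (g * (real M + 1))) ^ M else 0)"
proof (cases "t \<le> (real M + 1) / (real (F 1) powr (1/g) - 1)")
  case True
  define K where "K = (t + real M + 1) / (g * (real M + 1))"
  have fU: "real (F 1) \<le> pl_upper g t M" using feasible[OF g t, of "real (F 1)" M] Fg True by simp
  have "pl_likelihood g t M F = (\<Prod>i\<in>{1..M}. real (F i) powr (-(1 + 1/g)) * K)"
    unfolding pl_likelihood_def
  proof (rule prod.cong[OF refl])
    fix i assume i: "i \<in> {1..M}"
    have "F i \<le> F 1" using Fm i M by auto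
    then have "real (F i) \<le> pl_upper g t M" using fU by linarith
    moreover have "1 \<le> real (F i)" using F1 i by auto
    ultimately show "pl_density g t M (real (F i)) = real (F i) powr (-(1 + 1/g)) * K"
      unfolding density_eq[OF g t] K_def by simp
  qed
  also have "\<dots> = (\<Prod>i\<in>{1..M}. real (F i) powr (-(1 + 1/g))) * K ^ M"
    by (simp add: prod.distrib)
  finally show ?thesis using True by (simp add: K_def)
next
  case False
  have fU: "\<not> real (F 1) \<le> pl_upper g t M" using feasible[OF g t, of "real (F 1)" M] Fg False by simp
  have "pl_likelihood g t M F = 0" unfolding pl_likelihood_def
    by (rule prod_zero) (use fU M in \<open>auto simp: pl_density_def intro!: bexI[of _ 1]\<close>)
  then show ?thesis using False by simp
qed

theorem proposition2:
  fixes \<gamma> :: real and M :: nat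
  assumes "\<gamma> > 0" and "M > 0"
  shows "(\<forall>t>0. \<exists>C>0. pl_quantiles \<gamma> t M = {C * (t + real k) powr (-\<gamma>) | k. k \<in> {1..M}})
       \<and> (\<forall>F :: nat \<Rightarrow> nat.
            (\<forall>i\<in>{1..M}. 1 \<le> F i) \<and> (\<forall>i\<in>{1..M}. \<forall>j\<in>{1..M}. i \<le> j \<longrightarrow> F j \<le> F i)
            \<and> F 1 > 1 \<longrightarrow>
            (let t0 = (real M + 1) / (real (F 1) powr (1 / \<gamma>) - 1) in
               t0 > 0 \<and> (\<forall>t>0. t \<noteq> t0 \<longrightarrow> pl_likelihood \<gamma> t M F < pl_likelihood \<gamma> t0 M F)))"
proof (intro conjI allI impI)
  fix t :: real assume t: "t > 0"
  show "\<exists>C>0. pl_quantiles \<gamma> t M = {C * (t + real k) powr (-\<gamma>) | k. k \<in> {1..M}}"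
    using part1[OF assms(1) t] t by (intro exI[of _ "(t + real M + 1) powr \<gamma>"]) auto
next
  fix F :: "nat \<Rightarrow> nat"
  assume H: "(\<forall>i\<in>{1..M}. 1 \<le> F i) \<and> (\<forall>i\<in>{1..M}. \<forall>j\<in>{1..M}. i \<le> j \<longrightarrow> F j \<le> F i) \<and> F 1 > 1"
  define t0 where "t0 = (real M + 1) / (real (F 1) powr (1 / \<gamma>) - 1)"
  define P where "P = (\<Prod>i\<in>{1..M}. real (F i) powr (-(1 + 1/\<gamma>)))"
  define K where "K = (\<lambda>t. (t + real M + 1) / (\<gamma> * (real M + 1)))"
  have "real (F 1) powr (1 / \<gamma>) > 1" using H assms(1) by simp
  then have t0: "t0 > 0" by (simp add: t0_def)
  have P: "P > 0" unfolding P_def using H by (intro prod_pos) (auto simp: Suc_le_eq)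
  have L: "\<And>t. t > 0 \<Longrightarrow> pl_likelihood \<gamma> t M F = (if t \<le> t0 then P * K t ^ M else 0)"
    using lik[OF assms(1) _ _ _ _ assms(2)] H unfolding t0_def P_def K_def by blast
  have Lt0: "pl_likelihood \<gamma> t0 M F = P * K t0 ^ M" using L[OF t0] by simp
  have Kt0: "K t0 > 0" using t0 assms(1) by (simp add: K_def)
  have "\<forall>t>0. t \<noteq> t0 \<longrightarrow> pl_likelihood \<gamma> t M F < pl_likelihood \<gamma> t0 M F"
  proof (intro allI impI)
    fix t :: real assume t: "t > 0" and ne: "t \<noteq> t0"
    show "pl_likelihood \<gamma> t M F < pl_likelihood \<gamma> t0 M F"
    proof (cases "t \<le> t0")
      case True
      then have lt: "t < t0" using ne by simp
      have "0 \<le> K t" using t assms(1) by (simp add: K_def)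
      moreover have "K t < K t0" using lt assms(1) by (simp add: K_def divide_strict_right_mono)
      ultimately have "K t ^ M < K t0 ^ M" using assms(2) by (intro power_strict_mono) auto
      then show ?thesis using L[OF t] Lt0 True P by simp
    next
      case False
      then show ?thesis using L[OF t] Lt0 P Kt0 by simp
    qed
  qed
  then show "let t0 = (real M + 1) / (real (F 1) powr (1 / \<gamma>) - 1) in
               t0 > 0 \<and> (\<forall>t>0. t \<noteq> t0 \<longrightarrow> pl_likelihood \<gamma> t M F < pl_likelihood \<gamma> t0 M F)"
    using t0 unfolding t0_def Let_def by simp
qed

end
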